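(* Let $\tau$ be an ergodic invertible measure-preserving map of $[0,1]$ with Lebesgue measure $m$, and let $(\epsilon_n)_{n\ge1}$ be a sequence decreasing to $0$ with $0<\epsilon_n\le1$. Then there is an ergodic invertible measure-preserving map $\omega$ of $[0,1]$ that is isomorphic to $\tau$ (indeed $\omega=\sigma\circ\tau\circ\sigma^{-1}$ for some invertible measure-preserving $\sigma$) such that the intervals $([0,\epsilon_n])_{n\ge1}$ form an a.e. invisible measure-theoretic shrinking target for $\omega$: for a.e. $x\in[0,1]$, $\omega^n(x)\in[0,\epsilon_n]$ for only finitely many $n$. *)

theory Defs
  imports "HOL-Analysis.Analysis"
begin

abbreviation unit_int :: "real measure" where
  "unit_int \<equiv> lebesgue_on {0..1}"

definition mpt :: "(real \<Rightarrow> real) \<Rightarrow> bool" where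
  "mpt T \<longleftrightarrow> T \<in> unit_int \<rightarrow>\<^sub>M unit_int \<and> distr unit_int unit_int T = unit_int"

definition inv_mpt_with :: "(real \<Rightarrow> real) \<Rightarrow> (real \<Rightarrow> real) \<Rightarrow> bool" where
  "inv_mpt_with T S \<longleftrightarrow>
     mpt T \<and>
     mpt S \<and>
     (AE x in unit_int. S (T x) = x) \<and> (AE x in unit_int. T (S x) = x)"

definition inv_mpt :: "(real \<Rightarrow> real) \<Rightarrow> bool" where
  "inv_mpt T \<longleftrightarrow> (\<exists>S. inv_mpt_with T S)"

definition ergodic_map :: "(real \<Rightarrow> real) \<Rightarrow> bool" where
  "ergodic_map T \<longleftrightarrow>
     mpt T \<and>
     (\<forall>A \<in> sets unit_int. T -` A \<inter> space unit_int = A \<longrightarrow>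
        measure unit_int A = 0 \<or> measure unit_int A = 1)"

end

theory Submission
  imports Defs "HOL-Probability.Weak_Convergence"
begin


lemma space_ui[simp]: "space unit_int = {0..1}"
  by (simp add: space_restrict_space)

lemma mptD1: "mpt T \<Longrightarrow> T \<in> unit_int \<rightarrow>\<^sub>M unit_int"
  by (simp add: mpt_def)
lemma mptD2: "mpt T \<Longrightarrow> distr unit_int unit_int T = unit_int"
  by (simp add: mpt_def)

lemma mpt_into: "mpt T \<Longrightarrow> x \<in> {0..1} \<Longrightarrow> T x \<in> {0..1}"
  using measurable_space[OF mptD1] by fastforce

lemma mpt_comp: "mpt a \<Longrightarrow> mpt b \<Longrightarrow> mpt (\<lambda>x. a (b x))"
proof -
  assume a: "mpt a" and b: "mpt b"
  have m: "(\<lambda>x. a (b x)) \<in> unit_int \<rightarrow>\<^sub>M unit_int"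
    using measurable_comp[OF mptD1[OF b] mptD1[OF a]] by (simp add: comp_def)
  have "distr unit_int unit_int (\<lambda>x. a (b x)) = distr (distr unit_int unit_int b) unit_int a"
    using distr_distr[OF mptD1[OF a] mptD1[OF b]] by (simp add: comp_def)
  also have "\<dots> = unit_int" using a b by (simp add: mptD2)
  finally show ?thesis using m by (simp add: mpt_def)
qed

lemma mpt_id: "mpt (\<lambda>x. x)"
  unfolding mpt_def by (simp add: distr_id2)

lemma mpt_funpow: "mpt a \<Longrightarrow> mpt (a ^^ n)"
proof (induction n)
  case 0 then show ?case using mpt_id by (simp add: id_def)
next
  case (Suc n) then show ?case using mpt_comp[of a "a^^n"] by (simp add: comp_def)
qed

lemma AE_mpt: "mpt g \<Longrightarrow> (AE y in unit_int. P y) \<Longrightarrow> AE x in unit_int. P (g x)"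
proof -
  assume g: "mpt g" and P: "AE y in unit_int. P y"
  then have "AE y in distr unit_int unit_int g. P y" by (subst mptD2[OF g]) (rule P)
  then show ?thesis by (rule AE_distrD[OF mptD1[OF g]])
qed

lemma measure_mpt: "mpt g \<Longrightarrow> A \<in> sets unit_int \<Longrightarrow> measure unit_int (g -` A \<inter> {0..1}) = measure unit_int A"
  using measure_distr[of g unit_int unit_int A] by (simp add: mpt_def)

lemma sets_mpt: "mpt g \<Longrightarrow> A \<in> sets unit_int \<Longrightarrow> g -` A \<inter> {0..1} \<in> sets unit_int"
  using measurable_sets[OF mptD1] by fastforce

lemma prob_ui: "prob_space unit_int"
  by (auto intro!: prob_spaceI simp: emeasure_restrict_space)

interpretation ui: prob_space unit_int by (rule prob_ui)

lemma AE_eq_of_sub: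
  assumes A: "A \<in> sets unit_int" and B: "B \<in> sets unit_int" and ae: "AE x in unit_int. x \<in> A \<longrightarrow> x \<in> B"
    and eq: "measure unit_int A = measure unit_int B"
  shows "AE x in unit_int. x \<in> A \<longleftrightarrow> x \<in> B"
proof -
  have AB: "A - B \<in> sets unit_int" using A B by auto
  have "AE x in unit_int. x \<notin> A - B" using ae by eventually_elim auto
  hence "A - B \<in> null_sets unit_int" using AB by (simp add: AE_iff_null_sets[OF AB])
  hence n1: "measure unit_int (A - B) = 0" by (simp add: measure_def null_sets_def)
  have "measure unit_int A = measure unit_int (A \<inter> B) + measure unit_int (A - B)"
    using A B ui.finite_measure_Diff'[of A B] ui.finite_measure_Diff[of A "A - B"] by (simp add: Diff_Diff_Int)
  moreover have "measure unit_int B = measure unit_int (A \<inter> B) + measure unit_int (B - A)"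
    using A B ui.finite_measure_Diff'[of B A] ui.finite_measure_Diff[of B "B - A"] by (simp add: Diff_Diff_Int Int_commute)
  ultimately have "measure unit_int (B - A) = 0" using n1 eq by simp
  hence "B - A \<in> null_sets unit_int" using A B by (simp add: ui.emeasure_eq_measure null_sets_def)
  then have "AE x in unit_int. x \<notin> B - A" by (rule AE_not_in)
  moreover have "AE x in unit_int. x \<notin> A - B" using \<open>A - B \<in> null_sets unit_int\<close> by (rule AE_not_in)
  ultimately show ?thesis by eventually_elim auto
qed




lemma ergodic_mod0:
  assumes erg: "ergodic_map T" and B: "B \<in> sets unit_int"
    and ae: "AE x in unit_int. (x \<in> B \<longleftrightarrow> T x \<in> B)"
  shows "measure unit_int B = 0 \<or> measure unit_int B = 1"
proof -
  have mT: "mpt T" using erg by (simp add: ergodic_map_def)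
  have [measurable]: "(T^^k) \<in> unit_int \<rightarrow>\<^sub>M unit_int" for k
    using mptD1[OF mpt_funpow[OF mT]] .
  have [measurable]: "B \<in> sets unit_int" by (rule B)
  have step: "AE x in unit_int. ((T^^k) x \<in> B \<longleftrightarrow> (T^^(Suc k)) x \<in> B)" for k
    using AE_mpt[OF mpt_funpow[OF mT] ae, of k] by simp
  have "AE x in unit_int. \<forall>k. ((T^^k) x \<in> B \<longleftrightarrow> (T^^(Suc k)) x \<in> B)"
    using step by (simp add: AE_all_countable)
  then have iter: "AE x in unit_int. \<forall>k. ((T^^k) x \<in> B \<longleftrightarrow> x \<in> B)"
  proof eventually_elim
    case (elim x)
    show ?case
    proof
      fix k show "(T^^k) x \<in> B \<longleftrightarrow> x \<in> B"
        by (induction k) (use elim in auto)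
    qed
  qed
  define C where "C = {x \<in> space unit_int. \<forall>n. \<exists>k. n \<le> k \<and> (T^^k) x \<in> B}"
  have Cs: "C \<in> sets unit_int" unfolding C_def by measurable
  have inv: "T -` C \<inter> space unit_int = C"
  proof (intro set_eqI iffI)
    fix x assume x: "x \<in> T -` C \<inter> space unit_int"
    then have x01: "x \<in> space unit_int" by auto
    have "\<forall>n. \<exists>k. n \<le> k \<and> (T^^k) (T x) \<in> B" using x by (auto simp: C_def)
    then have "\<forall>n. \<exists>k. n \<le> k \<and> (T^^k) x \<in> B"
      by (metis funpow_Suc_right comp_apply le_SucI)
    then show "x \<in> C" using x01 by (simp add: C_def)
  next
    fix x assume x: "x \<in> C"
    then have x01: "x \<in> space unit_int" by (auto simp: C_def)
    then have Tx: "T x \<in> space unit_int" using mpt_into[OF mT] by simp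
    have h: "\<forall>n. \<exists>k. n \<le> k \<and> (T^^k) x \<in> B" using x by (simp add: C_def)
    have "\<forall>n. \<exists>k. n \<le> k \<and> (T^^k) (T x) \<in> B"
    proof
      fix n obtain k where "Suc n \<le> k" "(T^^k) x \<in> B" using h by blast
      then obtain k' where "k = Suc k'" "n \<le> k'" by (cases k) auto
      then show "\<exists>k. n \<le> k \<and> (T^^k) (T x) \<in> B"
        using \<open>(T^^k) x \<in> B\<close> by (auto simp del: funpow.simps simp: funpow_Suc_right)
    qed
    then show "x \<in> T -` C \<inter> space unit_int" using x01 Tx by (simp add: C_def)
  qed
  have "measure unit_int C = 0 \<or> measure unit_int C = 1"
    using erg Cs inv by (simp add: ergodic_map_def)
  moreover have "AE x in unit_int. x \<in> C \<longleftrightarrow> x \<in> B"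
    using iter AE_space
  proof eventually_elim
    case (elim x)
    show ?case
    proof
      assume "x \<in> C"
      then obtain k where "(T^^k) x \<in> B" by (auto simp: C_def)
      then show "x \<in> B" using elim by blast
    next
      assume "x \<in> B"
      then show "x \<in> C" using elim unfolding C_def by auto
    qed
  qed
  then have "measure unit_int C = measure unit_int B"
    using Cs B by (intro measure_eq_AE) auto
  ultimately show ?thesis by simp
qed




lemma ergodic_conj:
  assumes erg: "ergodic_map \<tau>" and iso: "inv_mpt_with \<sigma> \<sigma>'"
  shows "ergodic_map (\<lambda>x. \<sigma> (\<tau> (\<sigma>' x)))"
proof -
  have m\<tau>: "mpt \<tau>" using erg by (simp add: ergodic_map_def)
  have ms: "mpt \<sigma>" and ms': "mpt \<sigma>'" and ae1: "AE x in unit_int. \<sigma>' (\<sigma> x) = x"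
    using iso by (auto simp: inv_mpt_with_def)
  have m\<omega>: "mpt (\<lambda>x. \<sigma> (\<tau> (\<sigma>' x)))"
    using mpt_comp[OF ms mpt_comp[OF m\<tau> ms']] by simp
  show ?thesis unfolding ergodic_map_def
  proof (intro conjI m\<omega> ballI impI)
    fix A assume A: "A \<in> sets unit_int" and inv: "(\<lambda>x. \<sigma> (\<tau> (\<sigma>' x))) -` A \<inter> space unit_int = A"
    define B where "B = \<sigma> -` A \<inter> {0..1}"
    have Bs: "B \<in> sets unit_int" unfolding B_def by (rule sets_mpt[OF ms A])
    have mB: "measure unit_int B = measure unit_int A" unfolding B_def by (rule measure_mpt[OF ms A])
    have ae2: "AE x in unit_int. \<sigma>' (\<sigma> (\<tau> x)) = \<tau> x" by (rule AE_mpt[OF m\<tau> ae1])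
    have "AE x in unit_int. (x \<in> B \<longleftrightarrow> \<tau> x \<in> B)"
      using ae1 AE_space
    proof eventually_elim
      case (elim x)
      then have x: "x \<in> {0..1}" by simp
      have sx: "\<sigma> x \<in> {0..1}" using mpt_into[OF ms x] .
      have tx: "\<tau> x \<in> {0..1}" using mpt_into[OF m\<tau> x] .
      have "x \<in> B \<longleftrightarrow> \<sigma> x \<in> A" using x by (simp add: B_def)
      also have "\<dots> \<longleftrightarrow> \<sigma> (\<tau> (\<sigma>' (\<sigma> x))) \<in> A"
        using inv sx by (metis (no_types, lifting) IntD1 IntI space_ui vimage_eq)
      also have "\<dots> \<longleftrightarrow> \<tau> x \<in> B" using elim tx by (simp add: B_def)
      finally show ?case .
    qed
    then have "measure unit_int B = 0 \<or> measure unit_int B = 1"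
      by (rule ergodic_mod0[OF erg Bs])
    then show "measure unit_int A = 0 \<or> measure unit_int A = 1" using mB by simp
  qed
qed

lemma inv_mpt_conj:
  assumes iso: "inv_mpt_with \<sigma> \<sigma>'" and inv: "inv_mpt_with \<tau> S"
  shows "inv_mpt (\<lambda>x. \<sigma> (\<tau> (\<sigma>' x)))"
proof -
  have m\<tau>: "mpt \<tau>" and mS: "mpt S" and aeS1: "AE x in unit_int. S (\<tau> x) = x"
    and aeS2: "AE x in unit_int. \<tau> (S x) = x"
    using inv by (auto simp: inv_mpt_with_def)
  have ms: "mpt \<sigma>" and ms': "mpt \<sigma>'" and ae1: "AE x in unit_int. \<sigma>' (\<sigma> x) = x"
    and ae2: "AE x in unit_int. \<sigma> (\<sigma>' x) = x"
    using iso by (auto simp: inv_mpt_with_def)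
  have m\<omega>: "mpt (\<lambda>x. \<sigma> (\<tau> (\<sigma>' x)))"
    using mpt_comp[OF ms mpt_comp[OF m\<tau> ms']] by simp
  have m\<omega>': "mpt (\<lambda>x. \<sigma> (S (\<sigma>' x)))"
    using mpt_comp[OF ms mpt_comp[OF mS ms']] by simp
  have a1: "AE x in unit_int. \<sigma>' (\<sigma> (\<tau> (\<sigma>' x))) = \<tau> (\<sigma>' x)"
    by (rule AE_mpt[OF mpt_comp[OF m\<tau> ms'] ae1])
  have a2: "AE x in unit_int. S (\<tau> (\<sigma>' x)) = \<sigma>' x"
    by (rule AE_mpt[OF ms' aeS1])
  have b1: "AE x in unit_int. \<sigma>' (\<sigma> (S (\<sigma>' x))) = S (\<sigma>' x)"
    by (rule AE_mpt[OF mpt_comp[OF mS ms'] ae1])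
  have b2: "AE x in unit_int. \<tau> (S (\<sigma>' x)) = \<sigma>' x"
    by (rule AE_mpt[OF ms' aeS2])
  have "inv_mpt_with (\<lambda>x. \<sigma> (\<tau> (\<sigma>' x))) (\<lambda>x. \<sigma> (S (\<sigma>' x)))"
    unfolding inv_mpt_with_def
  proof (intro conjI m\<omega> m\<omega>')
    show "AE x in unit_int. \<sigma> (S (\<sigma>' (\<sigma> (\<tau> (\<sigma>' x))))) = x"
      using a1 a2 ae2 by eventually_elim simp
    show "AE x in unit_int. \<sigma> (\<tau> (\<sigma>' (\<sigma> (S (\<sigma>' x))))) = x"
      using b1 b2 ae2 by eventually_elim simp
  qed
  then show ?thesis by (auto simp: inv_mpt_def)
qed




abbreviation L0 :: "real measure" where "L0 \<equiv> restrict_space lborel {0..1}"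

lemma nullN_completion:
  assumes "N \<subseteq> N'" "N' \<in> null_sets M" shows "N \<in> null_sets (completion M)"
  using assms null_sets_completion_subset[of N N' M] null_sets_completionI[of N' M] by blast

lemma ui_completion: "unit_int = completion L0"
proof (rule measure_eqI)
  have c01: "{0..1::real} \<in> sets lborel" by simp
  have c01': "{0..1::real} \<in> sets (completion lborel)" by simp
  have c01s: "{0..1::real} \<inter> space (completion lborel) \<in> sets (completion lborel)" by simp
  have c01b: "{0..1::real} \<inter> space lborel \<in> sets lborel" by simp
  show se: "sets unit_int = sets (completion L0)"
  proof (intro set_eqI iffI)
    fix A assume "A \<in> sets unit_int"
    then have A0: "A \<subseteq> {0..1} \<and> A \<in> sets (completion lborel)"
      by (subst (asm) sets_restrict_space_iff) simp_all
    then have A: "A \<subseteq> {0..1}" "A \<in> sets (completion lborel)" by auto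
    obtain S N N' where SN: "A = S \<union> N" "N \<subseteq> N'" "N' \<in> null_sets lborel" "S \<in> sets lborel"
      using sets_completionE[OF A(2)] by blast
    have 1: "A = (S \<inter> {0..1}) \<union> (N \<inter> {0..1})" using SN A by auto
    have 2: "N' \<inter> {0..1} \<in> null_sets L0"
      using SN by (subst null_sets_restrict_space) (auto intro: null_set_Int2)
    have 3: "S \<inter> {0..1} \<in> sets L0"
      using SN by (subst sets_restrict_space_iff) auto
    show "A \<in> sets (completion L0)"
      by (rule sets_completionI[OF 1 _ 2 3]) (use SN in auto)
  next
    fix A assume "A \<in> sets (completion L0)"
    then obtain S N N' where SN: "A = S \<union> N" "N \<subseteq> N'" "N' \<in> null_sets L0" "S \<in> sets L0"
      using sets_completionE by blast
    have N': "N' \<subseteq> {0..1}" "N' \<in> null_sets lborel" using SN(3) null_sets_restrict_space[OF c01] by auto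
    have S0: "S \<subseteq> {0..1} \<and> S \<in> sets lborel" using SN(4) by (subst (asm) sets_restrict_space_iff) simp_all
    then have S: "S \<subseteq> {0..1}" "S \<in> sets lborel" by auto
    have "A \<in> sets (completion lborel)" by (rule sets_completionI[OF SN(1) SN(2) N'(2) S(2)])
    moreover have "A \<subseteq> {0..1}" using SN N' S by auto
    ultimately show "A \<in> sets unit_int"
      by (subst sets_restrict_space_iff) simp_all
  qed
  fix A assume "A \<in> sets unit_int"
  then have A: "A \<in> sets (completion L0)" "A \<subseteq> {0..1}" using se sets.sets_into_space[of A unit_int] by auto
  obtain S N N' where SN: "A = S \<union> N" "N \<subseteq> N'" "N' \<in> null_sets L0" "S \<in> sets L0"
    using sets_completionE[OF A(1)] by blast
  have N': "N' \<subseteq> {0..1}" "N' \<in> null_sets lborel" using SN(3) null_sets_restrict_space[OF c01] by auto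
  have S0: "S \<subseteq> {0..1} \<and> S \<in> sets lborel" using SN(4) by (subst (asm) sets_restrict_space_iff) simp_all
  then have S: "S \<subseteq> {0..1}" "S \<in> sets lborel" by auto
  have "emeasure (completion L0) A = emeasure (completion L0) S"
    unfolding SN(1) by (rule emeasure_Un_null_set) (use SN nullN_completion in auto)
  also have "\<dots> = emeasure lborel S" using SN(4) S by (simp add: emeasure_restrict_space)
  finally have e1: "emeasure (completion L0) A = emeasure lborel S" .
  have "emeasure unit_int A = emeasure (completion lborel) A"
    using A by (simp add: emeasure_restrict_space)
  also have "\<dots> = emeasure (completion lborel) S"
    unfolding SN(1) by (rule emeasure_Un_null_set) (use SN N' S nullN_completion in auto)
  also have "\<dots> = emeasure lborel S" using S by simp
  finally show "emeasure unit_int A = emeasure (completion L0) A" using e1 by simp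
qed




lemma cm_ui: "complete_measure unit_int"
  by (subst ui_completion) (rule completion.complete_measure_axioms)

lemma idm: "(\<lambda>x::real. x) \<in> borel_measurable unit_int"
  by (intro measurable_restrict_space1 measurable_completion) simp

lemma mpt_of_distr:
  assumes gm: "g \<in> borel_measurable unit_int" and gi: "\<And>x. x \<in> {0..1} \<Longrightarrow> g x \<in> {0..1}"
    and gd: "distr unit_int borel g = distr unit_int borel (\<lambda>x. x)"
  shows "mpt g"
proof -
  have gL0: "g \<in> unit_int \<rightarrow>\<^sub>M L0"
    by (rule measurable_restrict_space2) (use gm gi in auto)
  have D: "distr unit_int L0 g = L0"
  proof (rule measure_eqI)
    show "sets (distr unit_int L0 g) = sets L0" by simp
    fix X assume "X \<in> sets (distr unit_int L0 g)"
    then have X: "X \<in> sets L0" by simp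
    have X0: "X \<subseteq> {0..1} \<and> X \<in> sets lborel" using X by (subst (asm) sets_restrict_space_iff) simp_all
    have Xb: "X \<in> sets borel" using X0 by simp
    have "emeasure (distr unit_int L0 g) X = emeasure unit_int (g -` X \<inter> space unit_int)"
      by (rule emeasure_distr[OF gL0 X])
    also have "\<dots> = emeasure (distr unit_int borel g) X"
      by (rule emeasure_distr[OF gm Xb, symmetric])
    also have "\<dots> = emeasure (distr unit_int borel (\<lambda>x. x)) X" using gd by simp
    also have "\<dots> = emeasure unit_int (X \<inter> space unit_int)"
      using emeasure_distr[OF idm Xb] by simp
    also have "\<dots> = emeasure lborel X"
      using X0 by (simp add: emeasure_restrict_space Int_absorb2)
    also have "\<dots> = emeasure L0 X" using X0 by (simp add: emeasure_restrict_space)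
    finally show "emeasure (distr unit_int L0 g) X = emeasure L0 X" .
  qed
  have nulls: "null_sets (distr unit_int L0 g) = null_sets L0" using D by simp
  have m: "g \<in> unit_int \<rightarrow>\<^sub>M completion L0"
    by (rule complete_measure.measurable_completion2[OF cm_ui gL0]) (simp add: nulls)
  have "completion (distr unit_int L0 g) = distr unit_int (completion L0) g"
    by (rule complete_measure.completion_distr_eq[OF cm_ui gL0 nulls])
  then have "distr unit_int (completion L0) g = completion L0" using D by simp
  then show ?thesis using m unfolding mpt_def by (simp add: ui_completion[symmetric])
qed




abbreviation U0 :: "real measure" where "U0 \<equiv> restrict_space lborel {0<..<1}"

lemma bm_ui: "g \<in> borel_measurable borel \<Longrightarrow> g \<in> borel_measurable unit_int"
  by (intro measurable_restrict_space1 measurable_completion) simp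

lemma distr_U0:
  assumes g: "g \<in> borel_measurable borel"
  shows "distr unit_int borel g = distr U0 borel g"
proof (rule measure_eqI)
  show "sets (distr unit_int borel g) = sets (distr U0 borel g)" by simp
  fix X assume "X \<in> sets (distr unit_int borel g)"
  then have X: "X \<in> sets borel" by simp
  have gU: "g \<in> borel_measurable U0" by (rule measurable_restrict_space1) (use g in simp)
  have gs: "g -` X \<inter> UNIV \<in> sets borel" using measurable_sets[OF g X] by simp
  have "emeasure (distr unit_int borel g) X = emeasure unit_int (g -` X \<inter> {0..1})"
    using emeasure_distr[OF bm_ui[OF g] X] by simp
  also have "\<dots> = emeasure lborel (g -` X \<inter> {0..1})"
    using gs by (simp add: emeasure_restrict_space)
  also have "\<dots> = emeasure lborel (g -` X \<inter> {0<..<1})"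
  proof (rule emeasure_eq_AE)
    show "AE x in lborel. x \<in> g -` X \<inter> {0..1} \<longleftrightarrow> x \<in> g -` X \<inter> {0<..<1}"
      using AE_lborel_singleton[of "0::real"] AE_lborel_singleton[of "1::real"]
      by eventually_elim auto
  qed (use gs in auto)
  also have "\<dots> = emeasure U0 (g -` X \<inter> {0<..<1})"
    using gs by (simp add: emeasure_restrict_space)
  also have "\<dots> = emeasure (distr U0 borel g) X"
    using emeasure_distr[OF gU X] by (simp add: space_restrict_space)
  finally show "emeasure (distr unit_int borel g) X = emeasure (distr U0 borel g) X" .
qed

lemma AE_U0_ui:
  assumes "AE x in U0. P x" shows "AE x in unit_int. x \<in> {0<..<1} \<longrightarrow> P x"
proof -
  have "AE x in lborel. x \<in> {0<..<1} \<longrightarrow> P x"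
    using assms by (subst (asm) AE_restrict_space_iff) auto
  then have "AE x in completion lborel. x \<in> {0<..<1} \<longrightarrow> P x" by (rule AE_completion)
  then show ?thesis by (subst AE_restrict_space_iff) auto
qed

lemma AE_ui_open: "AE x in unit_int. x \<in> {0<..<1}"
proof -
  have "AE x in lborel. x \<noteq> (0::real) \<and> x \<noteq> 1"
    using AE_lborel_singleton[of "0::real"] AE_lborel_singleton[of "1::real"] by eventually_elim auto
  then have "AE x in completion lborel. x \<noteq> (0::real) \<and> x \<noteq> 1" by (rule AE_completion)
  then have "AE x in unit_int. x \<noteq> (0::real) \<and> x \<noteq> 1" by (subst AE_restrict_space_iff) auto
  then show ?thesis using AE_space by eventually_elim auto
qed




lemma AE_ui_ne: "AE x in unit_int. x \<noteq> c"
proof -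
  have "AE x in completion lborel. x \<noteq> (c::real)" by (rule AE_completion[OF AE_lborel_singleton])
  then show ?thesis by (subst AE_restrict_space_iff) auto
qed

lemma rank_iso:
  fixes h :: "real \<Rightarrow> int"
  assumes hm[measurable]: "h \<in> borel \<rightarrow>\<^sub>M count_space UNIV"
  shows "\<exists>\<sigma> \<sigma>'. inv_mpt_with \<sigma> \<sigma>' \<and>
     (\<forall>y\<in>{0..1}. measure unit_int {z\<in>{0..1}. h y < h z} \<le> \<sigma> y)"
proof -
  define \<kappa> where "\<kappa> y = y - 2 * real_of_int (h y)" for y
  define \<kappa>i where "\<kappa>i s = s - 2 * real_of_int \<lfloor>s / 2\<rfloor>" for s
  define kc where "kc s = (if \<kappa>i s \<le> 1 then \<kappa>i s else 0)" for s
  have \<kappa>m[measurable]: "\<kappa> \<in> borel_measurable borel" unfolding \<kappa>_def by measurable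
  have \<kappa>im[measurable]: "\<kappa>i \<in> borel_measurable borel" unfolding \<kappa>i_def by measurable
  have kcm[measurable]: "kc \<in> borel_measurable borel" unfolding kc_def by measurable
  have \<kappa>i\<kappa>: "\<kappa>i (\<kappa> y) = y" if "y \<in> {0..1}" for y
  proof -
    have "\<lfloor>(y - 2 * real_of_int (h y)) / 2\<rfloor> = - h y"
      using that by (subst floor_eq_iff) (auto simp: field_simps)
    then show ?thesis by (simp add: \<kappa>i_def \<kappa>_def)
  qed
  have \<kappa>i0: "\<kappa>i s \<ge> 0" for s
  proof -
    have "real_of_int \<lfloor>s / 2\<rfloor> \<le> s / 2" by (rule of_int_floor_le)
    then show ?thesis by (simp add: \<kappa>i_def)
  qed
  have kc01: "kc s \<in> {0..1}" for s using \<kappa>i0[of s] by (simp add: kc_def)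
  have kc\<kappa>: "kc (\<kappa> y) = y" if "y \<in> {0..1}" for y
    using \<kappa>i\<kappa>[OF that] that by (simp add: kc_def)
  define \<mu> where "\<mu> = distr unit_int borel \<kappa>"
  have rd: "real_distribution \<mu>"
    unfolding \<mu>_def real_distribution_def real_distribution_axioms_def
    using ui.prob_space_distr[OF bm_ui[OF \<kappa>m]] by simp
  interpret \<mu>: cdf_distribution \<mu> by (rule cdf_distribution.intro[OF rd])
  define F where "F = cdf \<mu>"
  define Q' where "Q' u = (if u \<in> {0<..<1} then Inf {x. u \<le> F x} else 0)" for u
  have Q'm[measurable]: "Q' \<in> borel_measurable borel"
  proof -
    have "(\<lambda>u. Inf {x. u \<le> F x}) \<in> borel_measurable (restrict_space borel {0<..<1})"
      unfolding F_def by (rule \<mu>.measurable_CI)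
    then show ?thesis unfolding Q'_def
      by (subst (asm) measurable_restrict_space_iff) auto
  qed
  have Q'U: "Q' \<in> borel_measurable U0" by (rule measurable_restrict_space1) simp
  have Fm[measurable]: "F \<in> borel_measurable borel" unfolding F_def by (rule \<mu>.measurable_C)
  have \<mu>Q: "distr U0 borel Q' = \<mu>"
  proof -
    have "distr U0 borel Q' = distr U0 borel (\<lambda>u. Inf {x. u \<le> F x})"
      by (rule distr_cong) (auto simp: Q'_def space_restrict_space)
    also have "\<dots> = \<mu>" unfolding F_def by (rule \<mu>.distr_I_eq_M)
    finally show ?thesis .
  qed
  have Fcont: "isCont F x" for x
  proof -
    have "measure \<mu> {x} = measure unit_int (\<kappa> -` {x} \<inter> space unit_int)"
      unfolding \<mu>_def by (rule measure_distr[OF bm_ui[OF \<kappa>m]]) simp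
    also have "\<dots> = measure unit_int {}"
    proof (rule measure_eq_AE)
      show "AE y in unit_int. (y \<in> \<kappa> -` {x} \<inter> space unit_int) = (y \<in> {})"
        using AE_ui_ne[of "\<kappa>i x"] AE_space
      proof eventually_elim
        case (elim y)
        show ?case
        proof (cases "\<kappa> y = x")
          case True
          then have "\<kappa>i x = y" using \<kappa>i\<kappa>[of y] elim by simp
          then show ?thesis using elim by simp
        qed simp
      qed
    qed (use measurable_sets[OF bm_ui[OF \<kappa>m], of "{x}"] in auto)
    finally show ?thesis unfolding F_def by (subst \<mu>.isCont_cdf) simp
  qed
  have FQ: "F (Q' u) = u" if u: "u \<in> {0<..<1}" for u
  proof -
    let ?q = "Inf {x. u \<le> F x}"
    have ps: "u \<le> F x \<longleftrightarrow> ?q \<le> x" for x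
      unfolding F_def by (rule \<mu>.pseudoinverse) (use u in auto)
    have le: "u \<le> F ?q" using ps[of ?q] by blast
    have "(\<lambda>n. F (?q - 1 / real (Suc n))) \<longlonglongrightarrow> F ?q"
    proof (rule isCont_tendsto_compose[OF Fcont])
      have "(\<lambda>n. 1 / real (Suc n)) \<longlonglongrightarrow> 0" by (rule LIMSEQ_Suc[OF lim_const_over_n])
      from tendsto_diff[OF tendsto_const[of ?q] this]
      show "(\<lambda>n. ?q - 1 / real (Suc n)) \<longlonglongrightarrow> ?q" by simp
    qed
    moreover have "F (?q - 1 / real (Suc n)) \<le> u" for n
    proof -
      have "\<not> ?q \<le> ?q - 1 / real (Suc n)" by simp
      then have "\<not> u \<le> F (?q - 1 / real (Suc n))" using ps[of "?q - 1 / real (Suc n)"] by blast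
      then show ?thesis by simp
    qed
    ultimately have "F ?q \<le> u" by (intro LIMSEQ_le_const2[where X="\<lambda>n. F (?q - 1 / real (Suc n))"]) auto
    then have "F ?q = u" using le by simp
    then show ?thesis using u by (simp add: Q'_def)
  qed
  define \<sigma> where "\<sigma> y = F (\<kappa> y)" for y
  define \<sigma>' where "\<sigma>' u = kc (Q' u)" for u
  have \<sigma>m[measurable]: "\<sigma> \<in> borel_measurable borel" unfolding \<sigma>_def by measurable
  have \<sigma>'m[measurable]: "\<sigma>' \<in> borel_measurable borel" unfolding \<sigma>'_def by measurable
  have F01: "F x \<in> {0..1}" for x unfolding F_def using \<mu>.cdf_nonneg \<mu>.cdf_bounded_prob by auto
  have d1: "distr unit_int borel \<sigma> = distr unit_int borel (\<lambda>x. x)"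
  proof -
    have "distr unit_int borel \<sigma> = distr \<mu> borel F"
      unfolding \<mu>_def \<sigma>_def using distr_distr[OF Fm bm_ui[OF \<kappa>m]] by (simp add: comp_def)
    also have "\<dots> = distr U0 borel (\<lambda>u. F (Q' u))"
      unfolding \<mu>Q[symmetric] using distr_distr[OF Fm Q'U] by (simp add: comp_def)
    also have "\<dots> = distr U0 borel (\<lambda>x. x)"
      by (rule distr_cong) (auto simp: space_restrict_space FQ)
    also have "\<dots> = distr unit_int borel (\<lambda>x. x)" by (rule distr_U0[symmetric]) simp
    finally show ?thesis .
  qed
  have d2: "distr unit_int borel \<sigma>' = distr unit_int borel (\<lambda>x. x)"
  proof -
    have "distr unit_int borel \<sigma>' = distr U0 borel \<sigma>'" by (rule distr_U0) simp
    also have "\<dots> = distr \<mu> borel kc"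
      unfolding \<mu>Q[symmetric] \<sigma>'_def using distr_distr[OF kcm Q'U] by (simp add: comp_def)
    also have "\<dots> = distr unit_int borel (\<lambda>y. kc (\<kappa> y))"
      unfolding \<mu>_def using distr_distr[OF kcm bm_ui[OF \<kappa>m]] by (simp add: comp_def)
    also have "\<dots> = distr unit_int borel (\<lambda>x. x)"
      by (rule distr_cong) (auto simp: kc\<kappa>)
    finally show ?thesis .
  qed
  have mpt1: "mpt \<sigma>" by (rule mpt_of_distr[OF bm_ui[OF \<sigma>m] _ d1]) (use F01 in \<open>simp add: \<sigma>_def\<close>)
  have mpt2: "mpt \<sigma>'" by (rule mpt_of_distr[OF bm_ui[OF \<sigma>'m] _ d2]) (use kc01 in \<open>simp add: \<sigma>'_def\<close>)
  have ae1: "AE y in unit_int. \<sigma>' (\<sigma> y) = y"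
  proof -
    have "AE s in \<mu>. F s \<in> {0<..<1} \<and> Q' (F s) = s"
      unfolding \<mu>Q[symmetric]
    proof (subst AE_distr_iff)
      show "AE x in U0. F (Q' x) \<in> {0<..<1} \<and> Q' (F (Q' x)) = Q' x"
        using AE_space[of U0] by eventually_elim (auto simp: space_restrict_space FQ)
    qed (use Q'U in auto)
    then have "AE y in unit_int. F (\<kappa> y) \<in> {0<..<1} \<and> Q' (F (\<kappa> y)) = \<kappa> y"
      unfolding \<mu>_def by (rule AE_distrD[OF bm_ui[OF \<kappa>m]])
    then show ?thesis using AE_space
      by eventually_elim (auto simp: \<sigma>_def \<sigma>'_def kc\<kappa>)
  qed
  have ae2: "AE u in unit_int. \<sigma> (\<sigma>' u) = u"
  proof -
    have "AE s in \<mu>. \<kappa> (kc s) = s"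
      unfolding \<mu>_def
    proof (subst AE_distr_iff)
      show "AE x in unit_int. \<kappa> (kc (\<kappa> x)) = \<kappa> x"
        using AE_space by eventually_elim (auto simp: kc\<kappa>)
    qed (auto intro: bm_ui)
    then have "AE u in U0. \<kappa> (kc (Q' u)) = Q' u"
      unfolding \<mu>Q[symmetric] by (rule AE_distrD[OF Q'U])
    then have "AE u in unit_int. u \<in> {0<..<1} \<longrightarrow> \<kappa> (kc (Q' u)) = Q' u" by (rule AE_U0_ui)
    then show ?thesis using AE_ui_open
      by eventually_elim (auto simp: \<sigma>_def \<sigma>'_def FQ)
  qed
  have iso: "inv_mpt_with \<sigma> \<sigma>'" unfolding inv_mpt_with_def using mpt1 mpt2 ae1 ae2 by simp
  have ord: "measure unit_int {z\<in>{0..1}. h y < h z} \<le> \<sigma> y" if y: "y \<in> {0..1}" for y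
  proof -
    have "\<sigma> y = measure \<mu> {..\<kappa> y}" unfolding \<sigma>_def F_def by (rule cdf_def2)
    also have "\<dots> = measure unit_int (\<kappa> -` {..\<kappa> y} \<inter> space unit_int)"
      unfolding \<mu>_def by (rule measure_distr[OF bm_ui[OF \<kappa>m]]) simp
    finally have e: "\<sigma> y = measure unit_int (\<kappa> -` {..\<kappa> y} \<inter> space unit_int)" .
    have sub: "{z\<in>{0..1}. h y < h z} \<subseteq> \<kappa> -` {..\<kappa> y} \<inter> space unit_int"
    proof
      fix z assume z: "z \<in> {z\<in>{0..1}. h y < h z}"
      then have "real_of_int (h y) + 1 \<le> real_of_int (h z)" by simp
      then show "z \<in> \<kappa> -` {..\<kappa> y} \<inter> space unit_int" using z y by (auto simp: \<kappa>_def)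
    qed
    have "measure unit_int {z\<in>{0..1}. h y < h z} \<le> measure unit_int (\<kappa> -` {..\<kappa> y} \<inter> space unit_int)"
      by (rule ui.finite_measure_mono[OF sub]) (rule measurable_sets[OF bm_ui[OF \<kappa>m]], simp)
    then show ?thesis using e by simp
  qed
  show ?thesis using iso ord by blast
qed




locale dyn =
  fixes \<tau> S :: "real \<Rightarrow> real"
  assumes erg: "ergodic_map \<tau>" and inv: "inv_mpt_with \<tau> S"
begin

lemma m\<tau>: "mpt \<tau>" using erg by (simp add: ergodic_map_def)
lemma mS: "mpt S" using inv by (simp add: inv_mpt_with_def)
lemma aeS1: "AE x in unit_int. S (\<tau> x) = x" using inv by (simp add: inv_mpt_with_def)

fun Hs :: "real set \<Rightarrow> nat \<Rightarrow> real set" where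
  "Hs A 0 = {0..1}"
| "Hs A (Suc k) = (S -` Hs A k \<inter> {0..1}) - A"

lemma Hs_sets: "A \<in> sets unit_int \<Longrightarrow> Hs A k \<in> sets unit_int"
proof (induction k)
  case 0 then show ?case using sets.top[of unit_int] by simp
next
  case (Suc k) then show ?case using sets_mpt[OF mS Suc.IH[OF Suc.prems]] by auto
qed

lemma Hs_sub01: "Hs A k \<subseteq> {0..1}" by (cases k) auto

lemma Hs_Suc_sub: "Hs A (Suc k) \<subseteq> Hs A k"
proof (induction k)
  case 0 then show ?case by auto
next
  case (Suc k) then show ?case by auto
qed

lemma Hs_mono: "k \<le> k' \<Longrightarrow> Hs A k' \<subseteq> Hs A k"
  using decseq_SucI[of "Hs A", OF Hs_Suc_sub] by (simp add: decseq_def)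

lemma Hs_step:
  assumes A: "A \<in> sets unit_int"
  shows "measure unit_int (Hs A k) - measure unit_int A \<le> measure unit_int (Hs A (Suc k))"
proof -
  let ?X = "S -` Hs A k \<inter> {0..1}"
  have X: "?X \<in> sets unit_int" using sets_mpt[OF mS Hs_sets[OF A]] .
  have mX: "measure unit_int ?X = measure unit_int (Hs A k)" using measure_mpt[OF mS Hs_sets[OF A]] .
  have "measure unit_int (?X - A) = measure unit_int ?X - measure unit_int (?X \<inter> A)"
    by (rule ui.finite_measure_Diff'[OF X A])
  moreover have "measure unit_int (?X \<inter> A) \<le> measure unit_int A"
    using A by (intro ui.finite_measure_mono) auto
  ultimately show ?thesis using mX by simp
qed

definition EE :: "real set \<Rightarrow> real set" where "EE A = (\<Inter>k. Hs A k)"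

lemma EE_sets: "A \<in> sets unit_int \<Longrightarrow> EE A \<in> sets unit_int"
  unfolding EE_def using Hs_sets by (intro sets.countable_INT) auto

lemma EE_null:
  assumes A: "A \<in> sets unit_int" and pos: "measure unit_int A > 0"
  shows "measure unit_int (EE A) = 0"
proof -
  have E: "EE A \<in> sets unit_int" by (rule EE_sets[OF A])
  let ?P = "\<tau> -` EE A \<inter> {0..1}"
  have P: "?P \<in> sets unit_int" using sets_mpt[OF m\<tau> E] .
  have "AE x in unit_int. x \<in> ?P \<longrightarrow> x \<in> EE A"
    using aeS1
  proof eventually_elim
    case (elim x)
    show ?case
    proof
      assume "x \<in> ?P"
      then have h: "\<forall>k. \<tau> x \<in> Hs A k" by (simp add: EE_def)
      have "\<forall>k. S (\<tau> x) \<in> Hs A k"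
      proof
        fix k show "S (\<tau> x) \<in> Hs A k" using h[rule_format, of "Suc k"] by auto
      qed
      then show "x \<in> EE A" using elim by (auto simp: EE_def)
    qed
  qed
  moreover have "measure unit_int ?P = measure unit_int (EE A)" by (rule measure_mpt[OF m\<tau> E])
  ultimately have "AE x in unit_int. x \<in> ?P \<longleftrightarrow> x \<in> EE A" by (rule AE_eq_of_sub[OF P E])
  then have "AE x in unit_int. x \<in> EE A \<longleftrightarrow> \<tau> x \<in> EE A"
    using AE_space by eventually_elim auto
  then have "measure unit_int (EE A) = 0 \<or> measure unit_int (EE A) = 1"
    by (rule ergodic_mod0[OF erg E])
  moreover have "measure unit_int (EE A) \<noteq> 1"
  proof
    assume one: "measure unit_int (EE A) = 1"
    have dis: "EE A \<inter> A = {}" unfolding EE_def using Hs.simps(2)[of A 0] by blast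
    have "measure unit_int (EE A \<union> A) = measure unit_int (EE A) + measure unit_int A"
      by (rule ui.finite_measure_Union[OF E A dis])
    moreover have "measure unit_int (EE A \<union> A) \<le> 1" by (rule ui.prob_le_1)
    ultimately show False using one pos by simp
  qed
  ultimately show ?thesis by simp
qed

lemma Hs_lim:
  assumes A: "A \<in> sets unit_int" and pos: "measure unit_int A > 0"
  shows "(\<lambda>k. measure unit_int (Hs A k)) \<longlonglongrightarrow> 0"
proof -
  have "(\<lambda>k. measure unit_int (Hs A k)) \<longlonglongrightarrow> measure unit_int (\<Inter>k. Hs A k)"
    by (rule ui.finite_Lim_measure_decseq) (use Hs_sets[OF A] decseq_SucI[of "Hs A", OF Hs_Suc_sub] in auto)
  then show ?thesis using EE_null[OF A pos] by (simp add: EE_def)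
qed

lemma back_Hs:
  assumes good: "\<forall>j. S (\<tau> ((\<tau>^^j) y)) = (\<tau>^^j) y"
  shows "(\<tau>^^n) y \<in> Hs A (k + n) \<Longrightarrow> y \<in> Hs A k"
  using good
proof (induction n arbitrary: y k)
  case 0 then show ?case by simp
next
  case (Suc n)
  have g': "\<forall>j. S (\<tau> ((\<tau>^^j) (\<tau> y))) = (\<tau>^^j) (\<tau> y)"
    using Suc.prems(2) by (metis comp_apply funpow_Suc_right)
  have "(\<tau>^^n) (\<tau> y) \<in> Hs A (Suc k + n)"
    using Suc.prems(1) by (simp add: funpow_Suc_right del: funpow.simps)
  then have "\<tau> y \<in> Hs A (Suc k)" by (rule Suc.IH[OF _ g'])
  then have "S (\<tau> y) \<in> Hs A k" by auto
  then show ?case using Suc.prems(2)[rule_format, of 0] by simp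
qed

lemma AE_good: "AE y in unit_int. \<forall>j. S (\<tau> ((\<tau>^^j) y)) = (\<tau>^^j) y"
  unfolding AE_all_countable
  using AE_mpt[OF mpt_funpow[OF m\<tau>] aeS1] by blast

end



context dyn begin

lemma choose_AM:
  fixes \<epsilon> :: "nat \<Rightarrow> real"
  assumes lim: "\<epsilon> \<longlonglongrightarrow> 0"
  shows "\<exists>A M. A \<in> sets unit_int \<and> measure unit_int A > 0 \<and>
     measure unit_int (Hs A (Suc M)) < (1/2)^i \<and>
     (\<forall>n. (1/2)^(i+2) \<le> \<epsilon> n \<longrightarrow> (1/2)^(i+1) \<le> measure unit_int (Hs A (2*n + M)))"
proof -
  define \<delta> :: real where "\<delta> = (1/2)^i"
  have \<delta>pos: "\<delta> > 0" and \<delta>le: "\<delta> \<le> 1" by (auto simp: \<delta>_def power_le_one)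
  have "eventually (\<lambda>n. \<epsilon> n < (1/2)^(i+2)) sequentially"
    by (rule order_tendstoD(2)[OF lim]) simp
  then obtain N where N: "\<And>n. n \<ge> N \<Longrightarrow> \<epsilon> n < (1/2)^(i+2)"
    unfolding eventually_sequentially by blast
  define a :: real where "a = \<delta> / (4 * (real N + 1))"
  have apos: "a > 0" using \<delta>pos by (simp add: a_def)
  have ale: "a \<le> 1"
  proof -
    have "a \<le> \<delta> / 1" unfolding a_def using \<delta>pos by (intro divide_left_mono) auto
    then show ?thesis using \<delta>le by simp
  qed
  define A where "A = {0..a}"
  have As: "A \<in> sets unit_int"
    unfolding A_def using ale by (subst sets_restrict_space_iff) auto
  have mA: "measure unit_int A = a"
    unfolding A_def using ale apos by (simp add: measure_restrict_space)
  have lim0: "(\<lambda>k. measure unit_int (Hs A k)) \<longlonglongrightarrow> 0"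
    by (rule Hs_lim[OF As]) (simp add: mA apos)
  have "eventually (\<lambda>k. measure unit_int (Hs A k) < \<delta>) sequentially"
    by (rule order_tendstoD(2)[OF lim0 \<delta>pos])
  then obtain k1 where k1: "measure unit_int (Hs A k1) < \<delta>"
    unfolding eventually_sequentially by blast
  define k0 where "k0 = (LEAST k. measure unit_int (Hs A k) < \<delta>)"
  have k0: "measure unit_int (Hs A k0) < \<delta>" unfolding k0_def by (rule LeastI[of _ k1]) (rule k1)
  have m0: "measure unit_int (Hs A 0) = 1" by (simp add: measure_restrict_space)
  have "k0 \<noteq> 0"
  proof
    assume "k0 = 0" then show False using k0 m0 \<delta>le by simp
  qed
  then obtain M where M: "k0 = Suc M" by (cases k0) auto
  have mM: "\<delta> \<le> measure unit_int (Hs A M)"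
    using not_less_Least[of M "\<lambda>k. measure unit_int (Hs A k) < \<delta>"] M by (simp add: k0_def)
  have decay: "\<delta> - real j * a \<le> measure unit_int (Hs A (M + j))" for j
  proof (induction j)
    case 0 then show ?case using mM by simp
  next
    case (Suc j)
    have "measure unit_int (Hs A (M + j)) - a \<le> measure unit_int (Hs A (Suc (M + j)))"
      using Hs_step[OF As, of "M + j"] mA by simp
    then show ?case using Suc.IH by (simp add: algebra_simps)
  qed
  have main: "(1/2)^(i+1) \<le> measure unit_int (Hs A (2*n + M))" if n: "(1/2)^(i+2) \<le> \<epsilon> n" for n
  proof -
    have "n < N" using N[of n] n by (meson not_le not_less)
    then have "real (2*n) * a \<le> real (2 * N) * a" using apos by (intro mult_right_mono) auto
    also have "\<dots> = \<delta> * (real N / (2 * (real N + 1)))" by (simp add: a_def field_simps)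
    also have "\<dots> \<le> \<delta> * (1/2)" using \<delta>pos by (intro mult_left_mono) (auto simp: field_simps)
    finally have "real (2*n) * a \<le> \<delta> / 2" by simp
    moreover have "\<delta> - real (2*n) * a \<le> measure unit_int (Hs A (2*n + M))"
      using decay[of "2*n"] by (simp add: add.commute)
    ultimately show ?thesis by (simp add: \<delta>_def)
  qed
  show ?thesis
    using As mA apos k0 M main by (intro exI[of _ A] exI[of _ M]) (auto simp: \<delta>_def)
qed

end



lemma ex_common:
  fixes N :: nat and P :: "nat \<Rightarrow> nat \<Rightarrow> bool"
  assumes mono: "\<And>i k k'. P i k \<Longrightarrow> k \<le> k' \<Longrightarrow> P i k'"
  shows "(\<forall>i<N. \<exists>k. P i k) \<Longrightarrow> \<exists>K. \<forall>i<N. P i K"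
proof (induction N)
  case 0 then show ?case by simp
next
  case (Suc N)
  then obtain K where K: "\<forall>i<N. P i K" by auto
  obtain k where k: "P N k" using Suc.prems by auto
  have "\<forall>i<Suc N. P i (max K k)"
  proof (intro allI impI)
    fix i assume "i < Suc N"
    then have "i < N \<or> i = N" by auto
    then show "P i (max K k)"
    proof
      assume "i < N" then have "P i K" using K by blast
      then show ?thesis by (rule mono) simp
    next
      assume "i = N" then have "P i k" using k by blast
      then show ?thesis by (rule mono) simp
    qed
  qed
  then show ?case by blast
qed

context dyn begin

lemma main_dyn:
  fixes \<epsilon> :: "nat \<Rightarrow> real"
  assumes pos: "\<And>n. n \<ge> 1 \<Longrightarrow> 0 < \<epsilon> n" and lim: "\<epsilon> \<longlonglongrightarrow> 0"
  shows "\<exists>\<sigma> \<sigma>'. inv_mpt_with \<sigma> \<sigma>' \<and>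
     (AE x in unit_int. finite {n. n \<ge> 1 \<and> ((\<lambda>x. \<sigma> (\<tau> (\<sigma>' x))) ^^ n) x \<in> {0..\<epsilon> n}})"
proof -
  have ex: "\<forall>i. \<exists>A M. A \<in> sets unit_int \<and> measure unit_int A > 0 \<and>
     measure unit_int (Hs A (Suc M)) < (1/2)^i \<and>
     (\<forall>n. (1/2)^(i+2) \<le> \<epsilon> n \<longrightarrow> (1/2)^(i+1) \<le> measure unit_int (Hs A (2*n + M)))"
    using choose_AM[OF lim] by blast
  from choice[OF ex] obtain Af where ex2: "\<forall>i. \<exists>M. Af i \<in> sets unit_int \<and> measure unit_int (Af i) > 0 \<and>
     measure unit_int (Hs (Af i) (Suc M)) < (1/2)^i \<and>
     (\<forall>n. (1/2)^(i+2) \<le> \<epsilon> n \<longrightarrow> (1/2)^(i+1) \<le> measure unit_int (Hs (Af i) (2*n + M)))" by blast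
  from choice[OF ex2] obtain Mf where AM0: "\<forall>i. Af i \<in> sets unit_int \<and> measure unit_int (Af i) > 0 \<and>
     measure unit_int (Hs (Af i) (Suc (Mf i))) < (1/2)^i \<and>
     (\<forall>n. (1/2)^(i+2) \<le> \<epsilon> n \<longrightarrow> (1/2)^(i+1) \<le> measure unit_int (Hs (Af i) (2*n + Mf i)))" by blast
  have AM: "\<And>i. Af i \<in> sets unit_int \<and> measure unit_int (Af i) > 0 \<and>
     measure unit_int (Hs (Af i) (Suc (Mf i))) < (1/2)^i \<and>
     (\<forall>n. (1/2)^(i+2) \<le> \<epsilon> n \<longrightarrow> (1/2)^(i+1) \<le> measure unit_int (Hs (Af i) (2*n + Mf i)))"
    using AM0 by blast
  have Afs: "\<And>i. Af i \<in> sets unit_int" using AM by blast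
  define G where "G K = (\<Union>i. Hs (Af i) (K + Mf i))" for K
  have Gs[measurable]: "G K \<in> sets unit_int" for K
    unfolding G_def using Hs_sets[OF Afs] by (intro sets.countable_UN) auto
  have Gmono: "G K' \<subseteq> G K" if "K \<le> K'" for K K'
  proof
    fix x assume "x \<in> G K'"
    then obtain i where "x \<in> Hs (Af i) (K' + Mf i)" by (auto simp: G_def)
    moreover have "Hs (Af i) (K' + Mf i) \<subseteq> Hs (Af i) (K + Mf i)" using that by (intro Hs_mono) simp
    ultimately show "x \<in> G K" by (auto simp: G_def)
  qed
  have G01: "G K \<subseteq> {0..1}" for K unfolding G_def using Hs_sub01 by blast
  define f where "f y = (LEAST K. y \<notin> G (Suc K))" for y
  have fm[measurable]: "f \<in> unit_int \<rightarrow>\<^sub>M count_space UNIV"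
    unfolding f_def by measurable
  have fin: "AE y in unit_int. \<exists>K. y \<notin> G K"
  proof -
    have summ: "summable (\<lambda>i. measure unit_int (Hs (Af i) (Suc (Mf i))))"
    proof (rule summable_comparison_test)
      show "\<exists>N. \<forall>n\<ge>N. norm (measure unit_int (Hs (Af n) (Suc (Mf n)))) \<le> (1/2)^n"
        using AM by (auto intro: less_imp_le)
      show "summable (\<lambda>n. (1/2::real)^n)" by (rule summable_geometric) simp
    qed
    have bc: "AE y in unit_int. eventually (\<lambda>i. y \<in> space unit_int - Hs (Af i) (Suc (Mf i))) sequentially"
      by (rule borel_cantelli_AE1) (use Hs_sets[OF Afs] summ in \<open>auto simp del: Hs.simps simp: ui.emeasure_eq_measure\<close>)
    have "AE y in unit_int. y \<notin> EE (Af i)" for i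
    proof (rule AE_not_in)
      show "EE (Af i) \<in> null_sets unit_int"
        using EE_null[of "Af i"] AM[of i] EE_sets[OF Afs]
        by (simp add: null_sets_def ui.emeasure_eq_measure)
    qed
    then have ee: "AE y in unit_int. \<forall>i. y \<notin> EE (Af i)" by (simp add: AE_all_countable)
    show ?thesis using bc ee
    proof eventually_elim
      case (elim y)
      then obtain N where N: "\<And>i. i \<ge> N \<Longrightarrow> y \<notin> Hs (Af i) (Suc (Mf i))"
        unfolding eventually_sequentially by blast
      have "\<forall>i<N. \<exists>k. y \<notin> Hs (Af i) k" using elim(2) by (auto simp: EE_def)
      then obtain K0 where K0: "\<forall>i<N. y \<notin> Hs (Af i) K0"
        using ex_common[of "\<lambda>i k. y \<notin> Hs (Af i) k" N] Hs_mono by blast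
      have "y \<notin> G (Suc K0)"
      proof
        assume "y \<in> G (Suc K0)"
        then obtain i where i: "y \<in> Hs (Af i) (Suc K0 + Mf i)" by (auto simp: G_def)
        show False
        proof (cases "i < N")
          case True
          then show False using K0 i Hs_mono[of K0 "Suc K0 + Mf i" "Af i"] by auto
        next
          case False
          then show False using N[of i] i Hs_mono[of "Suc (Mf i)" "Suc K0 + Mf i" "Af i"] by auto
        qed
      qed
      then show ?case by blast
    qed
  qed
  have fge: "K \<le> f z" if z: "z \<in> G K" "z \<notin> G K'" for z K K'
  proof -
    have "z \<notin> G (Suc K')" using z Gmono[of K' "Suc K'"] by auto
    then have "z \<notin> G (Suc (f z))" unfolding f_def by (rule LeastI)
    then show ?thesis using z(1) Gmono[of "Suc (f z)" K] by (meson not_le Suc_leI subsetD)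
  qed
  have fle: "f y \<le> 2*n - 1" if "n \<ge> 1" "y \<notin> G (2*n)" for y n
  proof -
    have "Suc (2*n - 1) = 2*n" using that by simp
    then show ?thesis unfolding f_def using that by (intro Least_le) simp
  qed
  have gmeas: "\<epsilon> n < measure unit_int (G (2*n))" if n: "n \<ge> 1" "\<epsilon> n < 1/2" for n
  proof -
    have en: "\<epsilon> n > 0" using pos n by simp
    obtain m where m: "(1/2::real)^m < \<epsilon> n" using real_arch_pow_inv[OF en, of "1/2"] by auto
    have ex: "\<exists>i. (1/2::real)^(i+2) \<le> \<epsilon> n"
    proof
      have pm: "(1/2::real)^(m+2) \<le> (1/2)^m" by (intro power_decreasing) auto
      show "(1/2::real)^(m+2) \<le> \<epsilon> n" using pm m by linarith
    qed
    define i where "i = (LEAST i. (1/2::real)^(i+2) \<le> \<epsilon> n)"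
    have i1: "(1/2::real)^(i+2) \<le> \<epsilon> n" unfolding i_def by (rule LeastI_ex[OF ex])
    have i2: "\<epsilon> n < (1/2::real)^(i+1)"
    proof (cases i)
      case 0 then show ?thesis using n by simp
    next
      case (Suc j)
      have "\<not> (1/2::real)^(j+2) \<le> \<epsilon> n"
        using not_less_Least[of j "\<lambda>i. (1/2::real)^(i+2) \<le> \<epsilon> n"] Suc by (simp add: i_def)
      then show ?thesis using Suc by simp
    qed
    have "(1/2)^(i+1) \<le> measure unit_int (Hs (Af i) (2*n + Mf i))" using AM[of i] i1 by blast
    also have "\<dots> \<le> measure unit_int (G (2*n))"
      by (rule ui.finite_measure_mono) (use Gs[of "2*n"] in \<open>auto simp: G_def\<close>)
    finally show ?thesis using i2 by simp
  qed
  have frm: "(\<lambda>x. if x \<in> {0..1} then real (f x) else 0) \<in> borel_measurable (completion lborel)"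
  proof -
    have "(\<lambda>x. real (f x)) \<in> borel_measurable unit_int" by measurable
    then show ?thesis by (subst (asm) measurable_restrict_space_iff) auto
  qed
  obtain g where gm: "g \<in> borel_measurable lborel"
    and gae: "AE x in lborel. (if x \<in> {0..1} then real (f x) else 0) = g x"
    using completion_ex_borel_measurable_real[OF frm] by blast
  define h where "h x = \<lfloor>g x\<rfloor>" for x
  have gm': "g \<in> borel_measurable borel" using gm by simp
  have hm: "h \<in> borel \<rightarrow>\<^sub>M count_space UNIV"
    unfolding h_def using measurable_compose[OF gm' measurable_real_floor] by (simp add: comp_def)
  have hm': "h \<in> unit_int \<rightarrow>\<^sub>M count_space UNIV"
    by (intro measurable_restrict_space1 measurable_completion) (use hm in simp)
  have hf: "AE x in unit_int. h x = int (f x)"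
  proof -
    have "AE x in completion lborel. (if x \<in> {0..1} then real (f x) else 0) = g x" by (rule AE_completion[OF gae])
    then have "AE x in unit_int. (if x \<in> {0..1} then real (f x) else 0) = g x"
      by (subst AE_restrict_space_iff) auto
    then show ?thesis using AE_space
    proof eventually_elim
      case (elim x)
      then have "g x = real (f x)" by simp
      then show ?case by (simp add: h_def)
    qed
  qed
  obtain \<sigma> \<sigma>' where iso: "inv_mpt_with \<sigma> \<sigma>'"
    and ord: "\<And>y. y \<in> {0..1} \<Longrightarrow> measure unit_int {z\<in>{0..1}. h y < h z} \<le> \<sigma> y"
    using rank_iso[OF hm] by blast
  have ms': "mpt \<sigma>'" and ae1: "AE x in unit_int. \<sigma>' (\<sigma> x) = x" and ae2: "AE x in unit_int. \<sigma> (\<sigma>' x) = x"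
    using iso by (auto simp: inv_mpt_with_def)
  have Gle: "measure unit_int (G (2*n)) \<le> measure unit_int {z\<in>{0..1}. h y < h z}"
    if hy: "h y \<le> int (2*n) - 1" for y n
  proof (rule ui.finite_measure_mono_AE)
    show "{z\<in>{0..1}. h y < h z} \<in> sets unit_int"
      using measurable_sets[OF hm', of "{k. h y < k}"] by (simp add: vimage_def Int_def conj_commute)
    show "AE z in unit_int. z \<in> G (2*n) \<longrightarrow> z \<in> {z\<in>{0..1}. h y < h z}"
      using hf fin AE_space
    proof eventually_elim
      case (elim z)
      show ?case
      proof
        assume z: "z \<in> G (2*n)"
        obtain K where "z \<notin> G K" using elim by blast
        then have "2*n \<le> f z" using fge z by blast
        then show "z \<in> {z\<in>{0..1}. h y < h z}" using elim hy by auto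
      qed
    qed
  qed
  have keyAE: "AE y in unit_int. \<forall>n. (1 \<le> n \<and> \<epsilon> n < 1/2 \<and> \<sigma> y \<le> \<epsilon> n) \<longrightarrow> y \<in> G (2*n)"
    using hf AE_space
  proof eventually_elim
    case (elim y)
    show ?case
    proof (intro allI impI)
      fix n assume n: "1 \<le> n \<and> \<epsilon> n < 1/2 \<and> \<sigma> y \<le> \<epsilon> n"
      show "y \<in> G (2*n)"
      proof (rule ccontr)
        assume "y \<notin> G (2*n)"
        then have "f y \<le> 2*n - 1" using fle n by blast
        then have "h y \<le> int (2*n) - 1" using elim n by auto
        then have "measure unit_int (G (2*n)) \<le> measure unit_int {z\<in>{0..1}. h y < h z}" by (rule Gle)
        also have "\<dots> \<le> \<sigma> y" using elim by (intro ord) simp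
        finally have "measure unit_int (G (2*n)) \<le> \<sigma> y" .
        moreover have "\<epsilon> n < measure unit_int (G (2*n))" using gmeas n by blast
        ultimately show False using n by linarith
      qed
    qed
  qed
  define \<omega> where "\<omega> = (\<lambda>x. \<sigma> (\<tau> (\<sigma>' x)))"
  have iterAE: "AE x in unit_int. \<forall>n. (\<omega>^^n) x = \<sigma> ((\<tau>^^n) (\<sigma>' x))"
  proof -
    have "AE x in unit_int. \<forall>n. \<sigma>' (\<sigma> ((\<tau>^^n) (\<sigma>' x))) = (\<tau>^^n) (\<sigma>' x)"
      unfolding AE_all_countable
      using AE_mpt[OF mpt_comp[OF mpt_funpow[OF m\<tau>] ms'] ae1] by blast
    then show ?thesis using ae2
    proof eventually_elim
      case (elim x)
      show ?case
      proof
        fix n show "(\<omega>^^n) x = \<sigma> ((\<tau>^^n) (\<sigma>' x))"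
        proof (induction n)
          case 0 then show ?case using elim by simp
        next
          case (Suc n) then show ?case using elim(1) by (simp add: \<omega>_def)
        qed
      qed
    qed
  qed
  have yAE: "AE y in unit_int. (\<forall>n. (1 \<le> n \<and> \<epsilon> n < 1/2 \<and> \<sigma> ((\<tau>^^n) y) \<le> \<epsilon> n) \<longrightarrow> (\<tau>^^n) y \<in> G (2*n))
      \<and> (\<forall>j. S (\<tau> ((\<tau>^^j) y)) = (\<tau>^^j) y) \<and> (\<exists>K. y \<notin> G K)"
  proof -
    have "AE y in unit_int. \<forall>n. (1 \<le> n \<and> \<epsilon> n < 1/2 \<and> \<sigma> ((\<tau>^^n) y) \<le> \<epsilon> n) \<longrightarrow> (\<tau>^^n) y \<in> G (2*n)"
      unfolding AE_all_countable
    proof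
      fix n
      show "AE y in unit_int. (1 \<le> n \<and> \<epsilon> n < 1/2 \<and> \<sigma> ((\<tau>^^n) y) \<le> \<epsilon> n) \<longrightarrow> (\<tau>^^n) y \<in> G (2*n)"
        using AE_mpt[OF mpt_funpow[OF m\<tau>] keyAE, of n] by eventually_elim blast
    qed
    then show ?thesis using AE_good fin by eventually_elim blast
  qed
  have xAE: "AE x in unit_int. finite {n. n \<ge> 1 \<and> (\<omega> ^^ n) x \<in> {0..\<epsilon> n}}"
  proof -
    have "eventually (\<lambda>n. \<epsilon> n < 1/2) sequentially" by (rule order_tendstoD(2)[OF lim]) simp
    then obtain N1 where N1: "\<And>n. n \<ge> N1 \<Longrightarrow> \<epsilon> n < 1/2" unfolding eventually_sequentially by blast
    show ?thesis using iterAE AE_mpt[OF ms' yAE]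
    proof eventually_elim
      case (elim x)
      let ?y = "\<sigma>' x"
      obtain K where K: "?y \<notin> G K" using elim(2) by blast
      have "{n. n \<ge> 1 \<and> (\<omega> ^^ n) x \<in> {0..\<epsilon> n}} \<subseteq> {..<max N1 K}"
      proof
        fix n assume n: "n \<in> {n. n \<ge> 1 \<and> (\<omega> ^^ n) x \<in> {0..\<epsilon> n}}"
        show "n \<in> {..<max N1 K}"
        proof (rule ccontr)
          assume "n \<notin> {..<max N1 K}"
          then have nN: "n \<ge> N1" "n \<ge> K" by auto
          have "\<sigma> ((\<tau>^^n) ?y) \<le> \<epsilon> n" using n elim(1) by auto
          then have "(\<tau>^^n) ?y \<in> G (2*n)" using elim(2) n N1[OF nN(1)] by auto
          then obtain i where i0: "(\<tau>^^n) ?y \<in> Hs (Af i) (2*n + Mf i)" by (auto simp: G_def)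
          have "2*n + Mf i = (n + Mf i) + n" by simp
          then have "(\<tau>^^n) ?y \<in> Hs (Af i) ((n + Mf i) + n)" using i0 by metis
          then have "?y \<in> Hs (Af i) (n + Mf i)" using back_Hs elim(2) by blast
          then have "?y \<in> G n" by (auto simp: G_def)
          then show False using K Gmono[OF nN(2)] by auto
        qed
      qed
      then show ?case by (rule finite_subset) simp
    qed
  qed
  show ?thesis using iso xAE unfolding \<omega>_def by blast
qed

end


theorem mainTheorem9:
  fixes \<tau> :: "real \<Rightarrow> real" and \<epsilon> :: "nat \<Rightarrow> real"
  assumes "ergodic_map \<tau>" and "inv_mpt \<tau>"
    and "\<And>n. n \<ge> 1 \<Longrightarrow> 0 < \<epsilon> n \<and> \<epsilon> n \<le> 1"
    and "\<And>n. n \<ge> 1 \<Longrightarrow> \<epsilon> (Suc n) \<le> \<epsilon> n"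
    and "\<epsilon> \<longlonglongrightarrow> 0"
  shows "\<exists>\<sigma> \<sigma>'. inv_mpt_with \<sigma> \<sigma>' \<and>
           (let \<omega> = (\<lambda>x. \<sigma> (\<tau> (\<sigma>' x))) in
              ergodic_map \<omega> \<and> inv_mpt \<omega> \<and>
              (AE x in unit_int. finite {n. n \<ge> 1 \<and> (\<omega> ^^ n) x \<in> {0..\<epsilon> n}}))"
proof -
  obtain S where S: "inv_mpt_with \<tau> S" using assms(2) by (auto simp: inv_mpt_def)
  interpret dyn \<tau> S by (rule dyn.intro[OF assms(1) S])
  obtain \<sigma> \<sigma>' where iso: "inv_mpt_with \<sigma> \<sigma>'"
    and ae: "AE x in unit_int. finite {n. n \<ge> 1 \<and> ((\<lambda>x. \<sigma> (\<tau> (\<sigma>' x))) ^^ n) x \<in> {0..\<epsilon> n}}"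
    using main_dyn[of \<epsilon>] assms(3,5) by blast
  have "ergodic_map (\<lambda>x. \<sigma> (\<tau> (\<sigma>' x)))" by (rule ergodic_conj[OF assms(1) iso])
  moreover have "inv_mpt (\<lambda>x. \<sigma> (\<tau> (\<sigma>' x)))" by (rule inv_mpt_conj[OF iso S])
  ultimately show ?thesis using iso ae by (auto simp: Let_def)
qed

end
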